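(* Let $f:\mathbb{X}\to\mathbb{R}$ be a finite measurable function. If $\limsup_n \frac1n\,|f\circ T^{-n}+f\circ T^{n}|<+\infty$ $\mu$-a.e. on a set of positive measure, then $\lim_n \frac1n f\circ T^n=0$ $\mu$-a.e. on $\mathbb{X}$.
   Context: Standing assumptions: $(\mathbb{X},\mathcal{X},\mu,T)$ is a probability space with $T$ an invertible, bi-measurable, measure-preserving, ergodic transformation. *)

theory Defs
  imports "HOL-Probability.Probability"
begin

definition measure_preserving :: "'a measure \<Rightarrow> ('a \<Rightarrow> 'a) \<Rightarrow> bool" where
  "measure_preserving M T \<longleftrightarrow> T \<in> measurable M M \<and>
     (\<forall>A\<in>sets M. emeasure M (T -` A \<inter> space M) = emeasure M A)"

definition invertible_bimeasurable :: "'a measure \<Rightarrow> ('a \<Rightarrow> 'a) \<Rightarrow> bool" where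
  "invertible_bimeasurable M T \<longleftrightarrow> bij_betw T (space M) (space M) \<and>
     T \<in> measurable M M \<and> inv_into (space M) T \<in> measurable M M"

definition ergodic :: "'a measure \<Rightarrow> ('a \<Rightarrow> 'a) \<Rightarrow> bool" where
  "ergodic M T \<longleftrightarrow> (\<forall>A\<in>sets M. T -` A \<inter> space M = A \<longrightarrow>
     measure M A = 0 \<or> measure M A = 1)"

definition standing_system :: "'a measure \<Rightarrow> ('a \<Rightarrow> 'a) \<Rightarrow> bool" where
  "standing_system M T \<longleftrightarrow> prob_space M \<and> invertible_bimeasurable M T \<and>
     measure_preserving M T \<and> ergodic M T"

end

theory Submission
  imports Defs
begin

locale mpsys = prob_space M for M :: "'a measure" +
  fixes T :: "'a \<Rightarrow> 'a"
  assumes Tm: "T \<in> measurable M M"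
    and pres: "\<And>A. A \<in> sets M \<Longrightarrow> emeasure M (T -` A \<inter> space M) = emeasure M A"
begin

lemma distr_T: "distr M M T = M"
  by (rule measure_eqI) (simp_all add: emeasure_distr Tm pres)

lemma integral_T:
  fixes g :: "'a \<Rightarrow> real"
  assumes "g \<in> borel_measurable M"
  shows "(\<integral>x. g (T x) \<partial>M) = (\<integral>x. g x \<partial>M)"
proof -
  have "integral\<^sup>L (distr M M T) g = (\<integral>x. g (T x) \<partial>M)" by (rule integral_distr[OF Tm assms])
  then show ?thesis unfolding distr_T by (rule sym)
qed

lemma Tn_space: "x \<in> space M \<Longrightarrow> (T ^^ n) x \<in> space M"
  by (rule measurable_space[OF measurable_compose_n[OF Tm]])

definition Sg :: "('a \<Rightarrow> real) \<Rightarrow> nat \<Rightarrow> 'a \<Rightarrow> real" where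
  "Sg g L x = (\<Sum>k<L. g ((T ^^ k) x))"

lemma Sg_Suc: "Sg g (Suc L) x = g x + Sg g L (T x)"
  unfolding Sg_def by (simp only: sum.lessThan_Suc_shift funpow_Suc_right funpow_0 comp_def)

fun MN :: "('a \<Rightarrow> real) \<Rightarrow> nat \<Rightarrow> 'a \<Rightarrow> real" where
  "MN g 0 x = 0"
| "MN g (Suc N) x = max (MN g N x) (Sg g (Suc N) x)"

lemma MN_ge: "L \<le> N \<Longrightarrow> Sg g L x \<le> MN g N x"
proof (induction N)
  case 0 then show ?case by (simp add: Sg_def)
next
  case (Suc N) then show ?case by (cases "L = Suc N") auto
qed

lemma MN_nonneg: "0 \<le> MN g N x"
  using MN_ge[of 0 N g x] by (simp add: Sg_def)

lemma MN_attained: "\<exists>L\<le>N. MN g N x = Sg g L x"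
proof (induction N)
  case 0 then show ?case by (auto simp: Sg_def)
next
  case (Suc N)
  then obtain L where "L \<le> N" "MN g N x = Sg g L x" by auto
  show ?case
  proof (cases "MN g N x \<le> Sg g (Suc N) x")
    case True then show ?thesis by (intro exI[of _ "Suc N"]) (simp add: max_def)
  next
    case False then show ?thesis using \<open>L \<le> N\<close> \<open>MN g N x = Sg g L x\<close>
      by (intro exI[of _ L]) (simp add: max_def)
  qed
qed

lemma MN_step: "MN g N x - MN g N (T x) \<le> (if MN g N x > 0 then g x else 0)"
proof (cases "MN g N x > 0")
  case True
  obtain L where L: "L \<le> N" "MN g N x = Sg g L x" using MN_attained by blast
  have "L \<noteq> 0" using True L by (cases L) (auto simp: Sg_def)
  then obtain L' where L': "L = Suc L'" by (cases L) auto
  have "Sg g L' (T x) \<le> MN g N (T x)" using L L' by (intro MN_ge) auto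
  then show ?thesis using True L L' by (simp add: Sg_Suc)
next
  case False then show ?thesis using MN_nonneg[of g N "T x"] by simp
qed

lemma Sg_meas: "g \<in> borel_measurable M \<Longrightarrow> Sg g L \<in> borel_measurable M"
  unfolding Sg_def
  by (intro borel_measurable_sum measurable_compose[OF measurable_compose_n[OF Tm]]) auto

lemma MN_meas: "g \<in> borel_measurable M \<Longrightarrow> MN g N \<in> borel_measurable M"
proof (induction N)
  case 0
  have "MN g 0 = (\<lambda>x. 0)" by (rule ext) simp
  then show ?case by simp
next
  case (Suc N)
  have "MN g (Suc N) = (\<lambda>x. max (MN g N x) (Sg g (Suc N) x))" by (rule ext) simp
  then show ?case using Suc Sg_meas[OF Suc(2)] by (simp add: borel_measurable_max)
qed

lemma Sg_bound: "(\<And>x. x \<in> space M \<Longrightarrow> \<bar>g x\<bar> \<le> B) \<Longrightarrow> x \<in> space M \<Longrightarrow> \<bar>Sg g L x\<bar> \<le> L * B"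
proof -
  assume b: "\<And>x. x \<in> space M \<Longrightarrow> \<bar>g x\<bar> \<le> B" and x: "x \<in> space M"
  have "\<bar>Sg g L x\<bar> \<le> (\<Sum>k<L. \<bar>g ((T ^^ k) x)\<bar>)" unfolding Sg_def by (rule sum_abs)
  also have "\<dots> \<le> (\<Sum>k<L. B)" by (intro sum_mono b Tn_space x)
  finally show ?thesis by simp
qed

lemma MN_bound: "(\<And>x. x \<in> space M \<Longrightarrow> \<bar>g x\<bar> \<le> B) \<Longrightarrow> x \<in> space M \<Longrightarrow> \<bar>MN g N x\<bar> \<le> N * \<bar>B\<bar>"
proof -
  assume b: "\<And>x. x \<in> space M \<Longrightarrow> \<bar>g x\<bar> \<le> B" and x: "x \<in> space M"
  obtain L where L: "L \<le> N" "MN g N x = Sg g L x" using MN_attained by blast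
  have "\<bar>Sg g L x\<bar> \<le> L * B" by (rule Sg_bound[OF b x])
  also have "\<dots> \<le> L * \<bar>B\<bar>" by (intro mult_left_mono) auto
  also have "\<dots> \<le> N * \<bar>B\<bar>" using L by (intro mult_right_mono) auto
  finally show ?thesis using L by simp
qed

lemma MN_mono: "m \<le> n \<Longrightarrow> MN g m x \<le> MN g n x"
proof (induction n rule: dec_induct)
  case base show ?case by simp
next
  case (step n) then show ?case by (simp add: le_max_iff_disj)
qed

lemma garsia:
  fixes g :: "'a \<Rightarrow> real"
  assumes gm: "g \<in> borel_measurable M" and gb: "\<And>x. x \<in> space M \<Longrightarrow> \<bar>g x\<bar> \<le> B"
    and ae: "AE x in M. \<exists>L. Sg g L x > 0"
  shows "0 \<le> (\<integral>x. g x \<partial>M)"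
proof -
  have gb': "\<bar>g x\<bar> \<le> \<bar>B\<bar>" if "x \<in> space M" for x using gb[OF that] by linarith
  define D where "D N = {x \<in> space M. \<not> MN g N x > 0}" for N
  have Dsets: "D N \<in> sets M" for N
    unfolding D_def using MN_meas[OF gm] by measurable
  have key: "- (\<bar>B\<bar> * measure M (D N)) \<le> (\<integral>x. g x \<partial>M)" for N
  proof -
    have im: "integrable M (MN g N)"
      by (rule integrable_const_bound[where B="N * \<bar>B\<bar>"]) (use MN_bound[OF gb] MN_meas[OF gm] in \<open>auto intro!: AE_I2\<close>)
    have imT: "integrable M (\<lambda>x. MN g N (T x))"
      by (rule integrable_const_bound[where B="N * \<bar>B\<bar>"])
         (use MN_bound[OF gb] Tn_space[of _ 1] MN_meas[OF gm] Tm in \<open>auto intro!: AE_I2\<close>)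
    have i1: "integrable M (\<lambda>x. if MN g N x > 0 then g x else 0)"
      by (rule integrable_const_bound[where B="\<bar>B\<bar>"]) (use gb' gm MN_meas[OF gm] in \<open>auto intro!: AE_I2\<close>)
    have i2: "integrable M (\<lambda>x. if MN g N x > 0 then 0 else g x)"
      by (rule integrable_const_bound[where B="\<bar>B\<bar>"]) (use gb' gm MN_meas[OF gm] in \<open>auto intro!: AE_I2\<close>)
    have "0 = (\<integral>x. MN g N x \<partial>M) - (\<integral>x. MN g N (T x) \<partial>M)"
      using integral_T[OF MN_meas[OF gm]] by simp
    also have "\<dots> = (\<integral>x. MN g N x - MN g N (T x) \<partial>M)"
      using im imT by simp
    also have "\<dots> \<le> (\<integral>x. (if MN g N x > 0 then g x else 0) \<partial>M)"
      by (intro integral_mono im imT i1 Bochner_Integration.integrable_diff MN_step)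
    finally have A: "0 \<le> (\<integral>x. (if MN g N x > 0 then g x else 0) \<partial>M)" .
    have "(\<integral>x. (if MN g N x > 0 then 0 else g x) \<partial>M) \<ge> (\<integral>x. - \<bar>B\<bar> * indicator (D N) x \<partial>M)"
    proof (rule integral_mono)
      show "integrable M (\<lambda>x. - \<bar>B\<bar> * indicator (D N) x)"
      proof -
        have "emeasure M (D N) < \<infinity>" by (simp add: less_top[symmetric])
        then show ?thesis using Dsets[of N] by (intro integrable_mult_right integrable_real_indicator)
      qed
      show "integrable M (\<lambda>x. if MN g N x > 0 then 0 else g x)" by (rule i2)
      fix x assume x: "x \<in> space M"
      show "- \<bar>B\<bar> * indicator (D N) x \<le> (if MN g N x > 0 then 0 else g x)"
        using gb'[OF x] x by (auto simp: D_def indicator_def)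
    qed
    also have "(\<integral>x. - \<bar>B\<bar> * indicator (D N) x \<partial>M) = - (\<bar>B\<bar> * measure M (D N))"
      using Dsets by simp
    finally have Bi: "- (\<bar>B\<bar> * measure M (D N)) \<le> (\<integral>x. (if MN g N x > 0 then 0 else g x) \<partial>M)" .
    have "(\<integral>x. g x \<partial>M) = (\<integral>x. (if MN g N x > 0 then g x else 0) + (if MN g N x > 0 then 0 else g x) \<partial>M)"
      by (intro Bochner_Integration.integral_cong) auto
    also have "\<dots> = (\<integral>x. (if MN g N x > 0 then g x else 0) \<partial>M) + (\<integral>x. (if MN g N x > 0 then 0 else g x) \<partial>M)"
      using i1 i2 by simp
    finally show ?thesis using A Bi by linarith
  qed
  have dec: "decseq D"
  proof (unfold decseq_def, intro allI impI subsetI)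
    fix m n x assume mn: "m \<le> n" and x: "x \<in> D n"
    then have "MN g m x \<le> MN g n x" by (intro MN_mono)
    with x show "x \<in> D m" by (auto simp: D_def)
  qed
  have lim: "(\<lambda>N. measure M (D N)) \<longlonglongrightarrow> measure M (\<Inter>N. D N)"
    by (rule finite_Lim_measure_decseq) (use Dsets dec in \<open>auto simp: decseq_def\<close>)
  have null: "measure M (\<Inter>N. D N) = 0"
  proof -
    have ae1: "AE x in M. x \<notin> (\<Inter>N. D N)"
      using ae
    proof eventually_elim
      case (elim x)
      then obtain L where L: "Sg g L x > 0" by auto
      then have "MN g L x > 0" using MN_ge[of L L g x] by simp
      then show ?case by (auto simp: D_def)
    qed
    have X: "(\<Inter>N. D N) \<in> sets M" using Dsets by auto
    have eq: "{x \<in> space M. \<not> x \<notin> (\<Inter>N. D N)} = (\<Inter>N. D N)"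
      using sets.sets_into_space[OF X] by blast
    have "emeasure M (\<Inter>N. D N) = 0"
      using AE_iff_measurable[OF X eq] ae1 by blast
    then show ?thesis by (simp add: measure_def)
  qed
  have t: "(\<lambda>N. measure M (D N)) \<longlonglongrightarrow> 0" using lim null by simp
  have t2: "(\<lambda>N. - (\<bar>B\<bar> * measure M (D N))) \<longlonglongrightarrow> - 0"
    by (rule tendsto_minus[OF tendsto_mult_right_zero[OF t]])
  have "- 0 \<le> (\<integral>x. g x \<partial>M)"
    by (rule LIMSEQ_le_const2[OF t2]) (use key in blast)
  then show ?thesis by simp
qed


lemma Sg_minus_const: "Sg (\<lambda>y. g y - c) L x = Sg g L x - c * L"
  unfolding Sg_def by (simp add: sum_subtractf)

lemma Sg_const_minus: "Sg (\<lambda>y. c - g y) L x = c * L - Sg g L x"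
  unfolding Sg_def by (simp add: sum_subtractf)

lemma Sg_ind_nonneg: "0 \<le> Sg (indicator E) L x"
  unfolding Sg_def by (intro sum_nonneg) auto

lemma invariant_01:
  assumes erg: "ergodic M T" and G: "G \<in> sets M"
    and inv: "\<And>x. x \<in> space M \<Longrightarrow> T x \<in> G \<longleftrightarrow> x \<in> G"
  shows "measure M G = 0 \<or> measure M G = 1"
proof -
  have sub: "G \<subseteq> space M" using sets.sets_into_space[OF G] .
  have "T -` G \<inter> space M = G"
    using sub inv by auto
  then show ?thesis using erg G unfolding ergodic_def by blast
qed

lemma measure0_AE: "G \<in> sets M \<Longrightarrow> measure M G = 0 \<Longrightarrow> AE x in M. x \<notin> G"
  by (intro AE_not_in) (simp add: null_sets_def emeasure_eq_measure)

lemma integrable_ind: "E \<in> sets M \<Longrightarrow> integrable M (indicator E :: 'a \<Rightarrow> real)"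
  by (intro integrable_real_indicator) (simp_all add: less_top[symmetric])

lemma integral_ind_minus: "E \<in> sets M \<Longrightarrow> (\<integral>x. indicator E x - c \<partial>M) = measure M E - c"
proof -
  assume E: "E \<in> sets M"
  have "(\<integral>x. indicator E x - c \<partial>M) = (\<integral>x. indicator E x \<partial>M) - (\<integral>x. c \<partial>M)"
    by (rule Bochner_Integration.integral_diff[OF integrable_ind[OF E]]) simp
  then show ?thesis using E by (simp add: prob_space)
qed

lemma integral_const_minus_ind: "E \<in> sets M \<Longrightarrow> (\<integral>x. c - indicator E x \<partial>M) = c - measure M E"
proof -
  assume E: "E \<in> sets M"
  have "(\<integral>x. c - indicator E x \<partial>M) = (\<integral>x. c \<partial>M) - (\<integral>x. indicator E x \<partial>M)"
    by (rule Bochner_Integration.integral_diff[OF _ integrable_ind[OF E]]) simp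
  then show ?thesis using E by (simp add: prob_space)
qed

lemma upper_bound:
  fixes c :: real
  assumes erg: "ergodic M T" and E: "E \<in> sets M" and c: "measure M E < c"
  shows "AE x in M. \<exists>B::nat. \<forall>L. Sg (indicator E) L x \<le> c * L + B"
proof -
  have c0: "0 \<le> c" using c measure_nonneg[of M E] by linarith
  have im: "indicator E \<in> borel_measurable M" using E by simp
  have [measurable]: "Sg (indicator E) L \<in> borel_measurable M" for L
    by (rule Sg_meas[OF im])
  define G where "G = {x \<in> space M. \<exists>B::nat. \<forall>L. Sg (indicator E) L x \<le> c * L + B}"
  have Gs: "G \<in> sets M" unfolding G_def by measurable
  have inv: "T x \<in> G \<longleftrightarrow> x \<in> G" if x: "x \<in> space M" for x
  proof
    assume "T x \<in> G"
    then obtain B :: nat where B: "\<forall>L. Sg (indicator E) L (T x) \<le> c * L + B" by (auto simp: G_def)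
    have "Sg (indicator E) L x \<le> c * L + real (B + 1)" for L
    proof (cases L)
      case 0 then show ?thesis using c0 by (simp add: Sg_def)
    next
      case (Suc L')
      have "Sg (indicator E) L x = indicator E x + Sg (indicator E) L' (T x)"
        using Suc by (simp add: Sg_Suc)
      also have "\<dots> \<le> 1 + (c * L' + B)" using B by (intro add_mono) (auto simp: indicator_def)
      also have "\<dots> \<le> c * L + real (B + 1)" using Suc c0 by (simp add: algebra_simps)
      finally show ?thesis .
    qed
    then show "x \<in> G" using x unfolding G_def by blast
  next
    assume "x \<in> G"
    then obtain B :: nat where B: "\<forall>L. Sg (indicator E) L x \<le> c * L + B" by (auto simp: G_def)
    have "Sg (indicator E) L (T x) \<le> c * L + real (B + nat \<lceil>c\<rceil>)" for L
    proof -
      have "Sg (indicator E) L (T x) \<le> indicator E x + Sg (indicator E) L (T x)"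
        by (auto simp: indicator_def)
      also have "\<dots> = Sg (indicator E) (Suc L) x" by (simp add: Sg_Suc)
      also have "\<dots> \<le> c * (Suc L) + B" using B by blast
      also have "\<dots> \<le> c * L + real (B + nat \<lceil>c\<rceil>)"
        using c0 by (simp add: algebra_simps)
      finally show ?thesis .
    qed
    moreover have "T x \<in> space M" using x Tn_space[of x 1] by simp
    ultimately show "T x \<in> G" unfolding G_def by blast
  qed
  have "measure M G = 0 \<or> measure M G = 1" by (rule invariant_01[OF erg Gs inv])
  moreover have "measure M G \<noteq> 0"
  proof
    assume "measure M G = 0"
    then have ae: "AE x in M. x \<notin> G" by (rule measure0_AE[OF Gs])
    have "AE x in M. \<exists>L. Sg (\<lambda>y. indicator E y - c) L x > 0"
      using ae AE_space
    proof eventually_elim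
      case (elim x)
      then obtain L where "\<not> Sg (indicator E) L x \<le> c * L + real (0::nat)"
        unfolding G_def by blast
      then show "\<exists>L. Sg (\<lambda>y. indicator E y - c) L x > 0"
        by (intro exI[of _ L]) (simp add: Sg_minus_const)
    qed
    have gm: "(\<lambda>y. indicator E y - c) \<in> borel_measurable M" using E by measurable
    have "0 \<le> (\<integral>x. indicator E x - c \<partial>M)"
      by (rule garsia[OF gm _ \<open>AE x in M. \<exists>L. Sg (\<lambda>y. indicator E y - c) L x > 0\<close>, where B="1 + c"])
         (use c0 in \<open>auto simp: indicator_def\<close>)
    also have "(\<integral>x. indicator E x - c \<partial>M) = measure M E - c"
      by (rule integral_ind_minus[OF E])
    finally show False using c by simp
  qed
  ultimately have "measure M G = 1" by simp
  then have "AE x in M. x \<in> G" by (rule AE_prob_1)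
  then show ?thesis by eventually_elim (auto simp: G_def)
qed


lemma lower_bound:
  fixes c :: real
  assumes erg: "ergodic M T" and E: "E \<in> sets M" and c: "c < measure M E" and c0: "0 \<le> c"
  shows "AE x in M. \<exists>B::nat. \<forall>L::nat. c * real L - real B \<le> Sg (indicator E) L x"
proof -
  have im: "indicator E \<in> borel_measurable M" using E by simp
  have [measurable]: "Sg (indicator E) L \<in> borel_measurable M" for L
    by (rule Sg_meas[OF im])
  define G where "G = {x \<in> space M. \<exists>B::nat. \<forall>L::nat. c * real L - real B \<le> Sg (indicator E) L x}"
  have Gs: "G \<in> sets M" unfolding G_def by measurable
  have inv: "T x \<in> G \<longleftrightarrow> x \<in> G" if x: "x \<in> space M" for x
  proof
    assume "T x \<in> G"
    then obtain B :: nat where B: "\<forall>L. c * L - B \<le> Sg (indicator E) L (T x)" by (auto simp: G_def)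
    have "c * L - real (B + nat \<lceil>c\<rceil>) \<le> Sg (indicator E) L x" for L
    proof (cases L)
      case 0
      have "- real B \<le> real_of_int \<lceil>c\<rceil>" using c0 by (smt (verit) le_of_int_ceiling of_nat_0_le_iff)
      then show ?thesis using 0 c0 by (simp add: Sg_def)
    next
      case (Suc L')
      have "c * L - real (B + nat \<lceil>c\<rceil>) \<le> c * L' - B"
        using Suc c0 by (simp add: algebra_simps)
      also have "\<dots> \<le> Sg (indicator E) L' (T x)" using B by blast
      also have "\<dots> \<le> indicator E x + Sg (indicator E) L' (T x)" by (auto simp: indicator_def)
      also have "\<dots> = Sg (indicator E) L x"
        using Suc by (simp add: Sg_Suc)
      finally show ?thesis .
    qed
    then show "x \<in> G" using x unfolding G_def by blast
  next
    assume "x \<in> G"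
    then obtain B :: nat where B: "\<forall>L. c * L - B \<le> Sg (indicator E) L x" by (auto simp: G_def)
    have "c * L - real (B + 1) \<le> Sg (indicator E) L (T x)" for L
    proof -
      have "c * L - real (B + 1) \<le> c * (Suc L) - B - 1" using c0 by (simp add: algebra_simps)
      also have "\<dots> \<le> Sg (indicator E) (Suc L) x - 1" using B by (smt (verit))
      also have "\<dots> = indicator E x + Sg (indicator E) L (T x) - 1" by (simp add: Sg_Suc)
      also have "\<dots> \<le> Sg (indicator E) L (T x)" by (auto simp: indicator_def)
      finally show ?thesis .
    qed
    moreover have "T x \<in> space M" using x Tn_space[of x 1] by simp
    ultimately show "T x \<in> G" unfolding G_def by blast
  qed
  have "measure M G = 0 \<or> measure M G = 1" by (rule invariant_01[OF erg Gs inv])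
  moreover have "measure M G \<noteq> 0"
  proof
    assume "measure M G = 0"
    then have ae: "AE x in M. x \<notin> G" by (rule measure0_AE[OF Gs])
    have ae2: "AE x in M. \<exists>L. Sg (\<lambda>y. c - indicator E y) L x > 0"
      using ae AE_space
    proof eventually_elim
      case (elim x)
      then obtain L where "\<not> c * L - real (0::nat) \<le> Sg (indicator E) L x"
        unfolding G_def by blast
      then show "\<exists>L. Sg (\<lambda>y. c - indicator E y) L x > 0"
        by (intro exI[of _ L]) (simp add: Sg_const_minus)
    qed
    have gm: "(\<lambda>y. c - indicator E y) \<in> borel_measurable M" using E by measurable
    have "0 \<le> (\<integral>x. c - indicator E x \<partial>M)"
      by (rule garsia[OF gm _ ae2, where B="1 + c"])
         (use c0 in \<open>auto simp: indicator_def\<close>)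
    also have "(\<integral>x. c - indicator E x \<partial>M) = c - measure M E"
      by (rule integral_const_minus_ind[OF E])
    finally show False using c by simp
  qed
  ultimately have "measure M G = 1" by simp
  then have "AE x in M. x \<in> G" by (rule AE_prob_1)
  then show ?thesis by eventually_elim (auto simp: G_def)
qed


lemma Sg_add: "Sg g (m + d) x = Sg g m x + (\<Sum>k<d. g ((T ^^ (m + k)) x))"
  by (induction d) (simp_all add: Sg_def)

lemma gaps:
  assumes erg: "ergodic M T" and E: "E \<in> sets M" and p: "0 < measure M E" and q: "1 \<le> q"
  shows "AE x in M. \<exists>m0. \<forall>m\<ge>m0. \<exists>v. m \<le> v \<and> v \<le> m + m div q \<and> (T ^^ v) x \<in> E"
proof -
  define P where "P = measure M E"
  define \<eta> where "\<eta> = P / (4 * q)"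
  have \<eta>0: "0 < \<eta>" using p q by (simp add: \<eta>_def P_def)
  have \<eta>q: "\<eta> * q = P / 4" using q by (simp add: \<eta>_def)
  have \<eta>le: "\<eta> \<le> P" using p q by (simp add: \<eta>_def P_def field_simps)
  have ae1: "AE x in M. \<exists>B::nat. \<forall>L::nat. (P - \<eta>) * real L - real B \<le> Sg (indicator E) L x"
    by (rule lower_bound[OF erg E]) (use \<eta>0 \<eta>le in \<open>auto simp: P_def\<close>)
  have ae2: "AE x in M. \<exists>B::nat. \<forall>L. Sg (indicator E) L x \<le> (P + \<eta>) * L + B"
    by (rule upper_bound[OF erg E]) (use \<eta>0 in \<open>auto simp: P_def\<close>)
  show ?thesis
    using ae1 ae2
  proof eventually_elim
    case (elim x)
    then obtain B1 B2 :: nat where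
      B1: "\<forall>L::nat. (P - \<eta>) * real L - real B1 \<le> Sg (indicator E) L x" and
      B2: "\<forall>L. Sg (indicator E) L x \<le> (P + \<eta>) * L + B2" by blast
    define B where "B = real B1 + real B2"
    define m0 where "m0 = nat \<lceil>4 * q * B / P\<rceil>"
    show ?case
    proof (rule exI[of _ m0], intro allI impI)
      fix m assume mm0: "m0 \<le> m"
      show "\<exists>v. m \<le> v \<and> v \<le> m + m div q \<and> (T ^^ v) x \<in> E"
      proof (rule ccontr)
        assume nov: "\<not> ?thesis"
        define d where "d = m div q + 1"
        have md: "m < q * d"
        proof -
          have l: "m mod q < q" using q by simp
          have e: "q * (m div q) + m mod q = m" by (rule mult_div_mod_eq)
          show ?thesis unfolding d_def distrib_left mult_1_right using e l by linarith
        qed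
        have zero: "(\<Sum>k<d. indicator E ((T ^^ (m + k)) x)) = (0::real)"
        proof (intro sum.neutral ballI)
          fix k assume "k \<in> {..<d}"
          then have "m \<le> m + k" "m + k \<le> m + m div q" by (auto simp: d_def)
          then have "(T ^^ (m + k)) x \<notin> E" using nov by blast
          then show "indicator E ((T ^^ (m + k)) x) = (0::real)" by simp
        qed
        have S: "Sg (indicator E) (m + d) x = Sg (indicator E) m x"
          using Sg_add[of "indicator E" m d x] zero by simp
        have "(P - \<eta>) * real (m + d) - real B1 \<le> (P + \<eta>) * m + B2"
          using B1[rule_format, of "m + d"] B2[rule_format, of m] S by linarith
        then have i1: "P * d - \<eta> * (2 * m + d) \<le> B"
          by (simp add: B_def algebra_simps)
        have "real (2 * m + d) \<le> 3 * q * d"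
        proof -
          have "d \<le> q * d" using q by simp
          then have "2 * m + d \<le> 3 * (q * d)" using md by linarith
          then have "2 * m + d \<le> 3 * q * d" by (simp add: mult.assoc)
          then show ?thesis by (metis of_nat_le_iff of_nat_mult of_nat_numeral)
        qed
        then have "\<eta> * (2 * m + d) \<le> \<eta> * (3 * q * d)"
          using \<eta>0 by (intro mult_left_mono) auto
        also have "\<eta> * (3 * q * d) = 3 * P / 4 * d" using \<eta>q by (simp add: algebra_simps)
        finally have "P * d / 4 \<le> B" using i1 by linarith
        then have dB: "d \<le> 4 * B / P" using p by (simp add: P_def field_simps)
        have "real m < q * d" using md by (metis of_nat_less_iff of_nat_mult)
        also have "\<dots> \<le> q * (4 * B / P)" unfolding of_nat_mult by (rule mult_left_mono[OF dB]) simp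
        also have "\<dots> \<le> m0" unfolding m0_def by (simp add: algebra_simps) linarith
        also have "\<dots> \<le> m" using mm0 by simp
        finally have "real m < real m" .
        then show False by simp
      qed
    qed
  qed
qed


end

locale invsys = mpsys +
  assumes bij: "bij_betw T (space M) (space M)"
    and invm: "inv_into (space M) T \<in> M \<rightarrow>\<^sub>M M"
    and erg: "ergodic M T"
begin

lemma funpow_apply_add: "(T ^^ a) ((T ^^ b) x) = (T ^^ (a + b)) x"
  by (simp add: funpow_add)

lemma inv_funpow: "x \<in> space M \<Longrightarrow> n \<le> v \<Longrightarrow> (inv_into (space M) T ^^ n) ((T ^^ v) x) = (T ^^ (v - n)) x"
proof (induction n)
  case 0 then show ?case by simp
next
  case (Suc n)
  then have IH: "(inv_into (space M) T ^^ n) ((T ^^ v) x) = (T ^^ (v - n)) x" by simp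
  have vn: "v - n = Suc (v - Suc n)" using Suc.prems by simp
  have inj: "inj_on T (space M)" using bij by (rule bij_betw_imp_inj_on)
  have sp: "(T ^^ (v - Suc n)) x \<in> space M" by (rule Tn_space[OF Suc.prems(1)])
  have "(inv_into (space M) T ^^ Suc n) ((T ^^ v) x) = inv_into (space M) T ((T ^^ (v - n)) x)"
    using IH by simp
  also have "\<dots> = inv_into (space M) T (T ((T ^^ (v - Suc n)) x))" by (simp only: vn funpow.simps comp_def)
  also have "\<dots> = (T ^^ (v - Suc n)) x" by (rule inv_into_f_f[OF inj sp])
  finally show ?case .
qed

lemma linear_growth:
  fixes f :: "'a \<Rightarrow> real" and j :: real
  assumes E: "E \<in> sets M" and p: "0 < measure M E" and j: "0 \<le> j"
    and Eb: "\<And>x n. x \<in> E \<Longrightarrow> 1 \<le> n \<Longrightarrow>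
       \<bar>f ((inv_into (space M) T ^^ n) x) + f ((T ^^ n) x)\<bar> \<le> j * n"
  shows "AE x in M. \<exists>D. \<forall>k. \<bar>f ((T ^^ k) x)\<bar> \<le> D + 2 * j * k"
proof -
  have "AE x in M. \<exists>m0. \<forall>m\<ge>m0. \<exists>v. m \<le> v \<and> v \<le> m + m div 4 \<and> (T ^^ v) x \<in> E"
    by (rule gaps[OF erg E p]) simp
  then show ?thesis using AE_space
  proof eventually_elim
    case (elim x)
    then obtain m0 where m0: "\<And>m. m0 \<le> m \<Longrightarrow> \<exists>v. m \<le> v \<and> v \<le> m + m div 4 \<and> (T ^^ v) x \<in> E"
      by blast
    have x: "x \<in> space M" using elim by simp
    define k0 where "k0 = 2 * m0 + 10"
    define D where "D = (\<Sum>k<k0. \<bar>f ((T ^^ k) x)\<bar>)"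
    have "\<bar>f ((T ^^ k) x)\<bar> \<le> D + 2 * j * k" for k
    proof (induction k rule: less_induct)
      case (less k)
      show ?case
      proof (cases "k < k0")
        case True
        have "\<bar>f ((T ^^ k) x)\<bar> \<le> D" unfolding D_def
          by (rule member_le_sum) (use True in auto)
        moreover have "0 \<le> 2 * j * k" using j by simp
        ultimately show ?thesis by linarith
      next
        case False
        define m where "m = (k + 1) div 2"
        have "m0 \<le> m" using False unfolding m_def k0_def by simp
        then obtain v where v: "m \<le> v" "v \<le> m + m div 4" "(T ^^ v) x \<in> E" using m0 by blast
        have d1: "(k + 1) div 2 * 2 + (k + 1) mod 2 = k + 1" by (rule div_mult_mod_eq)
        have d2: "(k + 1) mod 2 < 2" by simp
        have d3: "m div 4 * 4 + m mod 4 = m" by (rule div_mult_mod_eq)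
        have k10: "10 \<le> k" using False unfolding k0_def by simp
        have vk: "v < k" "k \<le> 2 * v" using v(1,2) d1 d2 d3 k10 unfolding m_def[symmetric] by linarith+
        define n where "n = k - v"
        define k' where "k' = v - n"
        have n1: "1 \<le> n" using vk unfolding n_def by simp
        have k'k: "k' < k" using vk unfolding k'_def n_def by simp
        have nv: "n \<le> v" using vk unfolding n_def by simp
        have comb: "2 * k' + n \<le> 2 * k" using vk unfolding k'_def n_def by simp
        have e1: "(inv_into (space M) T ^^ n) ((T ^^ v) x) = (T ^^ k') x"
          unfolding k'_def by (rule inv_funpow[OF x nv])
        have e2: "(T ^^ n) ((T ^^ v) x) = (T ^^ k) x"
          using vk by (simp add: n_def funpow_apply_add)
        have b: "\<bar>f ((T ^^ k') x) + f ((T ^^ k) x)\<bar> \<le> j * n"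
          using Eb[OF v(3) n1] unfolding e1 e2 .
        have IH: "\<bar>f ((T ^^ k') x)\<bar> \<le> D + 2 * j * k'" by (rule less.IH[OF k'k])
        have "real (2 * k' + n) \<le> real (2 * k)" using comb by (simp only: of_nat_le_iff)
        then have "j * (2 * k' + n) \<le> j * (2 * k)" using j by (intro mult_left_mono) simp_all
        then have "2 * j * k' + j * n \<le> 2 * j * k" by (simp add: algebra_simps)
        then show ?thesis using b IH by linarith
      qed
    qed
    then show ?case by blast
  qed
qed


lemma sublinear:
  fixes f :: "'a \<Rightarrow> real" and i :: real
  assumes G: "G \<in> sets M" and p: "0 < measure M G" and i: "0 \<le> i"
    and Gb: "\<And>x k. x \<in> G \<Longrightarrow> \<bar>f ((T ^^ k) x)\<bar> \<le> i * (k + 1)"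
  shows "AE x in M. (\<lambda>k. f ((T ^^ k) x) / real k) \<longlonglongrightarrow> 0"
proof -
  have "AE x in M. \<forall>q::nat. \<exists>m0. \<forall>m\<ge>m0. \<exists>v. m \<le> v \<and> v \<le> m + m div (q + 2) \<and> (T ^^ v) x \<in> G"
    unfolding AE_all_countable by (intro allI gaps[OF erg G p]) simp
  then show ?thesis
  proof eventually_elim
    case (elim x)
    show ?case
    proof (rule LIMSEQ_I)
      fix r :: real assume r: "0 < r"
      define q where "q = nat \<lceil>2 * i / r\<rceil> + 2"
      have q2: "2 \<le> q" unfolding q_def by simp
      obtain m0 where m0: "\<And>m. m0 \<le> m \<Longrightarrow> \<exists>v. m \<le> v \<and> v \<le> m + m div q \<and> (T ^^ v) x \<in> G"
      proof -
        have qq: "q - 2 + 2 = q" using q2 by simp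
        from elim[rule_format, of "q - 2"] show ?thesis unfolding qq using that by blast
      qed
      have iq: "i / q < r / 2"
      proof -
        have "2 * i / r \<le> real (nat \<lceil>2 * i / r\<rceil>)" by linarith
        then have "2 * i / r < q" unfolding q_def by simp
        then have "2 * i < q * r" using r by (simp add: field_simps)
        then show ?thesis using q2 by (simp add: field_simps)
      qed
      define N where "N = 2 * m0 + nat \<lceil>2 * i / r\<rceil> + 1"
      show "\<exists>no. \<forall>k\<ge>no. norm (f ((T ^^ k) x) / real k - 0) < r"
      proof (rule exI[of _ N], intro allI impI)
        fix k assume kN: "N \<le> k"
        define m where "m = k - k div q"
        have d1: "k div q * q + k mod q = k" by (rule div_mult_mod_eq)
        have kq: "k div q \<le> k div 2" using q2 by (intro div_le_mono2) auto
        have d2: "k div 2 * 2 + k mod 2 = k" by (rule div_mult_mod_eq)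
        have "m0 \<le> m" using kN kq d2 unfolding m_def N_def by linarith
        then obtain v where v: "m \<le> v" "v \<le> m + m div q" "(T ^^ v) x \<in> G" using m0 by blast
        have "m div q \<le> k div q" unfolding m_def by (rule div_le_mono) simp
        moreover have mk: "m + k div q = k" unfolding m_def using div_le_dividend[of k q] by simp
        ultimately have vk: "v \<le> k" "k - v \<le> k div q" using v(1,2) by linarith+
        have "\<bar>f ((T ^^ (k - v)) ((T ^^ v) x))\<bar> \<le> i * (real (k - v) + 1)" using Gb[OF v(3), of "k - v"] by (simp add: add.commute)
        then have b: "\<bar>f ((T ^^ k) x)\<bar> \<le> i * (real (k - v) + 1)"
          using vk by (simp add: funpow_apply_add)
        have kpos: "0 < real k" using kN unfolding N_def by simp
        have "real (k - v) \<le> real (k div q)" using vk by simp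
        also have "\<dots> \<le> real k / real q" by (rule of_nat_div_le_of_nat)
        finally have "i * (real (k - v) + 1) \<le> i * (real k / real q + 1)"
          using i by (intro mult_left_mono) simp_all
        with b have b2: "\<bar>f ((T ^^ k) x)\<bar> \<le> i * (real k / real q) + i" by (simp add: algebra_simps)
        have "\<bar>f ((T ^^ k) x)\<bar> / real k \<le> (i * (real k / real q) + i) / real k"
          using b2 kpos by (intro divide_right_mono) simp_all
        also have "\<dots> = i / q + i / k" using kpos by (simp add: field_simps)
        also have "i / k < r / 2"
        proof -
          have "2 * i / r \<le> real (nat \<lceil>2 * i / r\<rceil>)" by linarith
          also have "\<dots> < k" using kN unfolding N_def by simp
          finally have "2 * i < k * r" using r by (simp add: field_simps)
          then show ?thesis using kpos by (simp add: field_simps)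
        qed
        then have "i / q + i / k < r" using iq by linarith
        finally show "norm (f ((T ^^ k) x) / real k - 0) < r" by simp
      qed
    qed
  qed
qed


lemma null_from_AE: "X \<in> sets M \<Longrightarrow> (AE x in M. x \<notin> X) \<Longrightarrow> measure M X = 0"
proof -
  assume X: "X \<in> sets M" and ae: "AE x in M. x \<notin> X"
  have eq: "{x \<in> space M. \<not> x \<notin> X} = X" using sets.sets_into_space[OF X] by blast
  have "emeasure M X = 0" using AE_iff_measurable[OF X eq] ae by blast
  then show ?thesis by (simp add: measure_def)
qed

lemma main:
  fixes f :: "'a \<Rightarrow> real"
  assumes fm: "f \<in> borel_measurable M"
    and hyp: "\<exists>A\<in>sets M. measure M A > 0 \<and>
           (AE x in M. x \<in> A \<longrightarrow>
              limsup (\<lambda>n. ereal (\<bar>f ((inv_into (space M) T ^^ n) x) + f ((T ^^ n) x)\<bar> / real n))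
                < \<infinity>)"
  shows "AE x in M. (\<lambda>n. f ((T ^^ n) x) / real n) \<longlonglongrightarrow> 0"
proof -
  obtain A where A: "A \<in> sets M" "measure M A > 0"
    and aeA: "AE x in M. x \<in> A \<longrightarrow>
              limsup (\<lambda>n. ereal (\<bar>f ((inv_into (space M) T ^^ n) x) + f ((T ^^ n) x)\<bar> / real n)) < \<infinity>"
    using hyp by blast
  have [measurable]: "(\<lambda>x. f ((inv_into (space M) T ^^ n) x)) \<in> borel_measurable M" for n
    by (rule measurable_compose[OF measurable_compose_n[OF invm] fm])
  have [measurable]: "(\<lambda>x. f ((T ^^ n) x)) \<in> borel_measurable M" for n
    by (rule measurable_compose[OF measurable_compose_n[OF Tm] fm])
  define E where "E j = {x \<in> space M. \<forall>n::nat. 1 \<le> n \<longrightarrow>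
      \<bar>f ((inv_into (space M) T ^^ n) x) + f ((T ^^ n) x)\<bar> \<le> real j * real n}" for j :: nat
  have Es: "E j \<in> sets M" for j unfolding E_def by measurable
  have "\<exists>j. measure M (E j) > 0"
  proof (rule ccontr)
    assume "\<not> ?thesis"
    then have z: "measure M (E j) = 0" for j using measure_nonneg[of M "E j"] by (metis not_less order_antisym)
    have "AE x in M. \<forall>j. x \<notin> E j"
      unfolding AE_all_countable using measure0_AE[OF Es z] by blast
    then have "AE x in M. x \<notin> A"
      using aeA AE_space
    proof eventually_elim
      case (elim x)
      show ?case
      proof
        assume xA: "x \<in> A"
        have ls: "limsup (\<lambda>n. ereal (\<bar>f ((inv_into (space M) T ^^ n) x) + f ((T ^^ n) x)\<bar> / real n)) < \<infinity>"
          using elim xA by blast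
        obtain C where C: "\<And>n. \<bar>f ((inv_into (space M) T ^^ n) x) + f ((T ^^ n) x)\<bar> / real n \<le> C"
          using limsup_finite_then_bounded[OF ls] by blast
        define j where "j = nat \<lceil>C\<rceil>"
        have "x \<in> E j"
          unfolding E_def
        proof (intro CollectI conjI allI impI)
          show "x \<in> space M" using elim by simp
          fix n :: nat assume n: "1 \<le> n"
          have "\<bar>f ((inv_into (space M) T ^^ n) x) + f ((T ^^ n) x)\<bar> \<le> C * n"
            using C[of n] n by (simp add: field_simps)
          also have "C * n \<le> real j * n" unfolding j_def by (intro mult_right_mono) linarith+
          finally show "\<bar>f ((inv_into (space M) T ^^ n) x) + f ((T ^^ n) x)\<bar> \<le> real j * real n" .
        qed
        then show False using elim by blast
      qed
    qed
    then have "measure M A = 0" by (rule null_from_AE[OF A(1)])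
    then show False using A(2) by simp
  qed
  then obtain j where j: "measure M (E j) > 0" by blast
  have lg: "AE x in M. \<exists>D. \<forall>k. \<bar>f ((T ^^ k) x)\<bar> \<le> D + 2 * real j * k"
    by (rule linear_growth[OF Es j]) (auto simp: E_def)
  define G where "G i = {x \<in> space M. \<forall>k::nat. \<bar>f ((T ^^ k) x)\<bar> \<le> real i * (real k + 1)}" for i :: nat
  have Gs: "G i \<in> sets M" for i unfolding G_def by measurable
  have "\<exists>i. measure M (G i) > 0"
  proof (rule ccontr)
    assume "\<not> ?thesis"
    then have z: "measure M (G i) = 0" for i using measure_nonneg[of M "G i"] by (metis not_less order_antisym)
    have "AE x in M. \<forall>i. x \<notin> G i"
      unfolding AE_all_countable using measure0_AE[OF Gs z] by blast
    then have "AE x in M. False"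
      using lg AE_space
    proof eventually_elim
      case (elim x)
      then obtain D where D: "\<And>k. \<bar>f ((T ^^ k) x)\<bar> \<le> D + 2 * real j * k" by blast
      define i where "i = nat \<lceil>max D (2 * real j)\<rceil>"
      have iD: "D \<le> real i" "2 * real j \<le> real i" unfolding i_def by linarith+
      have "x \<in> G i"
        unfolding G_def
      proof (intro CollectI conjI allI)
        show "x \<in> space M" using elim by simp
        fix k :: nat
        have "2 * real j * k \<le> real i * k" using iD by (intro mult_right_mono) auto
        then show "\<bar>f ((T ^^ k) x)\<bar> \<le> real i * (real k + 1)"
          using D[of k] iD by (simp add: algebra_simps)
      qed
      then show False using elim by blast
    qed
    then show False by simp
  qed
  then obtain i where i: "measure M (G i) > 0" by blast
  show ?thesis
    by (rule sublinear[OF Gs i, where i="real i"]) (auto simp: G_def add.commute)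
qed

end

lemma main_bridge:
  assumes "standing_system M T"
  shows "invsys M T"
  using assms unfolding standing_system_def invertible_bimeasurable_def measure_preserving_def
  by (intro invsys.intro mpsys.intro invsys_axioms.intro mpsys_axioms.intro) auto



theorem proposition3:
  fixes M :: "'a measure" and T :: "'a \<Rightarrow> 'a" and f :: "'a \<Rightarrow> real"
  assumes "standing_system M T"
    and "f \<in> borel_measurable M"
    and "\<exists>A\<in>sets M. measure M A > 0 \<and>
           (AE x in M. x \<in> A \<longrightarrow>
              limsup (\<lambda>n. ereal (\<bar>f ((inv_into (space M) T ^^ n) x) + f ((T ^^ n) x)\<bar> / real n))
                < \<infinity>)"
  shows "AE x in M. (\<lambda>n. f ((T ^^ n) x) / real n) \<longlonglongrightarrow> 0"
proof -
  interpret invsys M T by (rule main_bridge[OF assms(1)])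
  show ?thesis by (rule main[OF assms(2,3)])
qed

end
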